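(* Let $n\ge 3$, and consider a 3-SAT instance on $n$ variables together with its associated system (S). Then: (a) (S) has a rational feasible solution; (b) if the 3-SAT formula $C_1\wedge\cdots\wedge C_m$ is satisfiable, then (S) has a rational feasible solution of encoding size at most $4n+\mathcal{L}$, where $\mathcal{L}$ is a constant independent of $n$ and of the instance; (c) if the formula is not satisfiable, then every rational feasible solution of (S) has encoding size at least $2^n$.
   Context: Let $h(y) := 2y_1^3 + y_2^3 - 6y_1y_2 + 4$ and $R_\gamma := [1.259-\gamma,1.26]\times[1.587,1.59]$. Let $D\subseteq\mathbb{R}\times\mathbb{R}^n$ be the set of $(s,d)$ with $0\le d_1\le\frac12$, $0\le d_k\le d_{k-1}^2$ ($k=2,\dots,n$), $0\le s\le d_n^2$. A 3-SAT instance consists of Boolean variables $w_1,\dots,w_n$ and clauses $C_1,\dots,C_m$, each a disjunction of three literals (a literal is some $w_j$ or its negation $\bar w_j$). To the literal $w_j$ associate the real variable $x_j$ and to $\bar w_j$ the real variable $x_{n+j}$. For clause $C_i$ denote by $x_{i_1},x_{i_2},x_{i_3}$ the variables associated with its three literals. System (S) has variables $x\in\mathbb{R}^{2n}$, $\gamma,\Delta,s\in\mathbb{R}$, $y\in\mathbb{R}^2$, $d\in\mathbb{R}^n$, and constraints: $-1\le x_j\le 1$ for $j\in[2n]$; $x_j+x_{n+j}=0$ for $j\in[n]$; $x_{i_1}+x_{i_2}+x_{i_3}\ge -1-\Delta$ for each clause $C_i$; $\gamma\ge 0$, $0\le\Delta\le 2$, $\Delta+\gamma/2\le 2$; $y\in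 R_\gamma$; $(s,d)\in D$; and $-n^5\sum_{j=1}^n x_j^2 + h(y) - s\le -n^6$. Size means binary encoding length of the rational vector. *)

theory Defs
  imports Complex_Main
begin

text \<open>A literal is a pair (j, b) with j in 1..n: b = True stands for w_j,
  b = False for the negation of w_j.\<close>

type_synonym literal = "nat \<times> bool"
type_synonym clause = "literal \<times> literal \<times> literal"

definition lit_var :: "nat \<Rightarrow> literal \<Rightarrow> nat" where
  "lit_var n l = (if snd l then fst l else n + fst l)"

definition lit_ok :: "nat \<Rightarrow> literal \<Rightarrow> bool" where
  "lit_ok n l \<longleftrightarrow> fst l \<in> {1..n}"

definition instance_ok :: "nat \<Rightarrow> clause list \<Rightarrow> bool" where
  "instance_ok n cls \<longleftrightarrow>
     (\<forall>(l1, l2, l3) \<in> set cls. lit_ok n l1 \<and> lit_ok n l2 \<and> lit_ok n l3)"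

definition lit_true :: "(nat \<Rightarrow> bool) \<Rightarrow> literal \<Rightarrow> bool" where
  "lit_true a l \<longleftrightarrow> (if snd l then a (fst l) else \<not> a (fst l))"

definition satisfiable :: "clause list \<Rightarrow> bool" where
  "satisfiable cls \<longleftrightarrow> (\<exists>a. \<forall>(l1, l2, l3) \<in> set cls.
      lit_true a l1 \<or> lit_true a l2 \<or> lit_true a l3)"

definition h :: "real \<Rightarrow> real \<Rightarrow> real" where
  "h y1 y2 = 2 * y1 ^ 3 + y2 ^ 3 - 6 * y1 * y2 + 4"

definition in_R :: "real \<Rightarrow> real \<Rightarrow> real \<Rightarrow> bool" where
  "in_R \<gamma> y1 y2 \<longleftrightarrow> 1.259 - \<gamma> \<le> y1 \<and> y1 \<le> 1.26 \<and> 1.587 \<le> y2 \<and> y2 \<le> 1.59"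

definition in_D :: "nat \<Rightarrow> real \<Rightarrow> (nat \<Rightarrow> real) \<Rightarrow> bool" where
  "in_D n s d \<longleftrightarrow> 0 \<le> d 1 \<and> d 1 \<le> 1/2 \<and>
     (\<forall>k \<in> {2..n}. 0 \<le> d k \<and> d k \<le> (d (k - 1))\<^sup>2) \<and>
     0 \<le> s \<and> s \<le> (d n)\<^sup>2"

text \<open>System (S).  x is indexed by 1..2n, d by 1..n; other values are irrelevant.\<close>
definition feasible_S ::
  "nat \<Rightarrow> clause list \<Rightarrow> (nat \<Rightarrow> real) \<Rightarrow> real \<Rightarrow> real \<Rightarrow> real \<Rightarrow> real \<Rightarrow> real \<Rightarrow> (nat \<Rightarrow> real) \<Rightarrow> bool"
  where
  "feasible_S n cls x \<gamma> \<Delta> s y1 y2 d \<longleftrightarrow>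
     (\<forall>j \<in> {1..2*n}. -1 \<le> x j \<and> x j \<le> 1) \<and>
     (\<forall>j \<in> {1..n}. x j + x (n + j) = 0) \<and>
     (\<forall>(l1, l2, l3) \<in> set cls.
        x (lit_var n l1) + x (lit_var n l2) + x (lit_var n l3) \<ge> -1 - \<Delta>) \<and>
     \<gamma> \<ge> 0 \<and> 0 \<le> \<Delta> \<and> \<Delta> \<le> 2 \<and> \<Delta> + \<gamma> / 2 \<le> 2 \<and>
     in_R \<gamma> y1 y2 \<and> in_D n s d \<and>
     - ((real n) ^ 5 * (\<Sum>j = 1..n. (x j)\<^sup>2)) + h y1 y2 - s \<le> - ((real n) ^ 6)"

definition feasible_Q ::
  "nat \<Rightarrow> clause list \<Rightarrow> (nat \<Rightarrow> rat) \<Rightarrow> rat \<Rightarrow> rat \<Rightarrow> rat \<Rightarrow> rat \<Rightarrow> rat \<Rightarrow> (nat \<Rightarrow> rat) \<Rightarrow> bool"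
  where
  "feasible_Q n cls x \<gamma> \<Delta> s y1 y2 d \<longleftrightarrow>
     feasible_S n cls (\<lambda>j. of_rat (x j)) (of_rat \<gamma>) (of_rat \<Delta>) (of_rat s)
       (of_rat y1) (of_rat y2) (\<lambda>k. of_rat (d k))"

definition rat_size :: "rat \<Rightarrow> nat" where
  "rat_size r = (case quotient_of r of (p, q) \<Rightarrow>
      nat \<lceil>log 2 (real_of_int (\<bar>p\<bar> + 1))\<rceil> + nat \<lceil>log 2 (real_of_int q)\<rceil>)"

definition sol_size ::
  "nat \<Rightarrow> (nat \<Rightarrow> rat) \<Rightarrow> rat \<Rightarrow> rat \<Rightarrow> rat \<Rightarrow> rat \<Rightarrow> rat \<Rightarrow> (nat \<Rightarrow> rat) \<Rightarrow> nat" where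
  "sol_size n x \<gamma> \<Delta> s y1 y2 d =
     (\<Sum>j = 1..2*n. rat_size (x j)) + rat_size \<gamma> + rat_size \<Delta> + rat_size s
     + rat_size y1 + rat_size y2 + (\<Sum>k = 1..n. rat_size (d k))"

end

theory Submission
  imports Defs
begin


lemma no_rat_cube: "(q::rat)^3 \<noteq> 2"
proof
  assume q3: "q^3 = 2"
  obtain p r where qr: "quotient_of q = (p, r)" by (cases "quotient_of q")
  have r0: "r > 0" using quotient_of_denom_pos[OF qr] .
  have cop: "coprime p r" using quotient_of_coprime[OF qr] .
  have qd: "q = of_int p / of_int r" using quotient_of_div[OF qr] .
  have "(of_int p / of_int r :: rat)^3 = 2" using q3 qd by simp
  then have "(of_int p)^3 = (2::rat) * (of_int r)^3" using r0
    by (simp add: power_divide field_simps)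
  then have e: "p^3 = 2 * r^3"
    by (metis (mono_tags) of_int_eq_iff of_int_mult of_int_numeral of_int_power)
  then have "even (p^3)" by simp
  then have ep: "even p" by simp
  then obtain k where k: "p = 2*k" by blast
  have "8 * k^3 = 2 * r^3" using e k by (simp add: power_mult_distrib)
  then have "r^3 = 4 * k^3" by simp
  then have "even (r^3)" by simp
  then have "even r" by simp
  with ep cop show False by (metis coprime_common_divisor odd_one)
qed




lemma h_decomp:
  assumes "t \<ge> 0" "u \<ge> 0"
  shows "h t u = 2*(t - sqrt u)^2*(t + 2*sqrt u) + ((sqrt u)^3 - 2)^2"
proof -
  have u: "u = (sqrt u)^2" using assms by simp
  define r where "r = sqrt u"
  have "h t (r^2) = 2*(t - r)^2*(t + 2*r) + (r^3 - 2)^2"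
    unfolding h_def by (simp add: algebra_simps power2_eq_square power3_eq_cube)
  then show ?thesis using u r_def by metis
qed

lemma h_zero:
  assumes "t \<ge> 0" "u \<ge> 0" "h t u \<le> 0"
  shows "t^3 = 2"
proof -
  define r where "r = sqrt u"
  have r0: "r \<ge> 0" using assms r_def by simp
  have e: "h t u = 2*(t - r)^2*(t + 2*r) + (r^3 - 2)^2" using h_decomp[OF assms(1,2)] r_def by simp
  have a: "2*(t - r)^2*(t + 2*r) \<ge> 0" using assms r0 by simp
  have b: "(r^3 - 2)^2 \<ge> 0" by simp
  have b0: "(r^3 - 2)^2 = 0" using a b e assms(3) by linarith
  then have r3: "r^3 = 2" by simp
  then have "r > 0" using r0 by (cases "r = 0") auto
  have a0: "2*(t - r)^2*(t + 2*r) = 0" using a b e assms(3) by linarith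
  with \<open>r > 0\<close> assms(1) have "t = r" by simp
  with r3 show ?thesis by simp
qed

lemma D_bound:
  assumes "in_D n s d"
  shows "k \<in> {1..n} \<Longrightarrow> 0 \<le> d k \<and> d k \<le> (1/2)^(2^(k-1))"
proof (induction k)
  case 0 then show ?case by simp
next
  case (Suc k)
  show ?case
  proof (cases "k = 0")
    case True then show ?thesis using assms by (simp add: in_D_def)
  next
    case False
    then have IH: "0 \<le> d k \<and> d k \<le> (1/2)^(2^(k-1))" using Suc by simp
    have "Suc k \<in> {2..n}" using False Suc.prems by auto
    then have "0 \<le> d (Suc k) \<and> d (Suc k) \<le> (d k)^2" using assms unfolding in_D_def by fastforce
    moreover have "(d k)^2 \<le> ((1/2::real)^(2^(k-1)))^2" using IH by (simp add: power_mono)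
    moreover have "((1/2::real)^(2^(k-1)))^2 = (1/2)^(2^(Suc k - 1))"
    proof -
      have "(2::nat)^(k-1)*2 = 2^(Suc k - 1)" using False by (cases k) auto
      then show ?thesis by (metis power_mult)
    qed
    ultimately show ?thesis by simp
  qed
qed

lemma s_bound:
  assumes "in_D n s d" "n \<ge> 1"
  shows "s \<le> (1/2)^(2^n)"
proof -
  have "0 \<le> d n \<and> d n \<le> (1/2)^(2^(n-1))" using D_bound[OF assms(1)] assms(2) by simp
  then have "(d n)^2 \<le> ((1/2::real)^(2^(n-1)))^2" by (simp add: power_mono)
  also have "\<dots> = (1/2)^(2^n)"
  proof -
    have "(2::nat)^(n-1)*2 = 2^n" using assms(2) by (cases n) auto
    then show ?thesis by (metis power_mult)
  qed
  finally show ?thesis using assms(1) unfolding in_D_def by simp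
qed




lemma approx:
  assumes "0 < e" "e \<le> 1"
  shows "\<exists>q::rat. 1.2598 \<le> (of_rat q::real) \<and> (of_rat q::real) \<le> 1.26 \<and> ((of_rat q::real)^3 - 2)^2 \<le> e"
proof -
  define c where "c = root 3 (2::real)"
  have c3: "c^3 = 2" unfolding c_def by (simp add: real_root_pow_pos2)
  have cpos: "c > 0" unfolding c_def by simp
  have cub: "c < 1.25995"
  proof (rule ccontr)
    assume "\<not> c < 1.25995"
    then have "(1.25995::real)^3 \<le> c^3" by (intro power_mono) auto
    with c3 show False by (simp add: power3_eq_cube)
  qed
  have clb: "c > 1.2598"
  proof (rule ccontr)
    assume "\<not> c > 1.2598"
    then have "c^3 \<le> (1.2598::real)^3" using cpos by (intro power_mono) auto
    with c3 show False by (simp add: power3_eq_cube)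
  qed
  define \<eta> where "\<eta> = e / 100000"
  have eta: "0 < \<eta>" "\<eta> \<le> 0.00001" using assms by (auto simp: \<eta>_def)
  obtain r where r: "r \<in> \<rat>" "c < r" "r < c + \<eta>" using Rats_dense_in_real[of c "c + \<eta>"] eta by auto
  obtain q where rq: "r = of_rat q" using r(1) Rats_cases by blast
  have r1: "1.2598 \<le> r" "r \<le> 1.26" using r clb cub eta by auto
  have fac: "r^3 - 2 = (r - c) * (r^2 + r*c + c^2)" using c3
    by (simp add: algebra_simps power2_eq_square power3_eq_cube)
  have b1: "r^2 + r*c + c^2 \<le> 5"
  proof -
    have "r^2 \<le> 1.26^2" using r1 by (intro power_mono) auto
    moreover have "c^2 \<le> 1.26^2" using cub cpos by (intro power_mono) auto
    moreover have "r*c \<le> 1.26*1.26" using r1 cub cpos by (intro mult_mono) auto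
    ultimately show ?thesis by (simp add: power2_eq_square)
  qed
  have b0: "0 \<le> r^2 + r*c + c^2" using r1 cpos by simp
  have "0 \<le> r^3 - 2" using fac b0 r(2) by simp
  moreover have "r^3 - 2 \<le> \<eta> * 5" unfolding fac
    using r(2,3) b0 b1 by (intro mult_mono) auto
  ultimately have "(r^3 - 2)^2 \<le> (\<eta> * 5)^2" by (intro power_mono) auto
  also have "\<dots> \<le> e" using assms unfolding \<eta>_def by (simp add: power2_eq_square)
  finally show ?thesis using r1 rq by blast
qed



lemma t1: "k = Suc (Suc m) \<Longrightarrow> (2::nat)^(k-1-1)*2 = 2^(k-1)" by simp
lemma t2: "(2::nat)^(k-1-1)*2 = 2^(k-1) \<Longrightarrow> ((1/2::real)^(2^(k-1-1)))^2 = (1/2)^(2^(k-1))" by (metis power_mult)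
lemma inD_witness:
  assumes "n \<ge> 3"
  shows "in_D n ((1/2)^(2^n)) (\<lambda>k. (1/2)^(2^(k-1)))"
  unfolding in_D_def
proof (intro conjI ballI)
  fix k assume k: "k \<in> {2..n}"
  have "k = Suc (Suc (k - 2))" using k by auto
  then have "(2::nat)^(k-1-1)*2 = 2^(k-1)" by (metis t1)
  then have "((1/2::real)^(2^(k-1-1)))^2 = (1/2)^(2^(k-1))" by (rule t2)
  then show "(1/2::real)^(2^(k-1)) \<le> ((1/2)^(2^(k-1-1)))^2" by simp
  show "0 \<le> (1/2::real)^(2^(k-1))" by simp
next
  have "(2::nat)^(n-1)*2 = 2^n" using assms by (cases n) auto
  then have "((1/2::real)^(2^(n-1)))^2 = (1/2)^(2^n)" by (metis power_mult)
  then show "(1/2::real)^(2^n) \<le> ((1/2)^(2^(n-1)))^2" by simp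
  show "0 \<le> (1/2::real)^(2^n)" by simp
  show "0 \<le> (1/2::real)^(2^(1-1))" by simp
  show "(1/2::real)^(2^(1-1)) \<le> 1/2" by simp
qed


lemma part_a:
  assumes "n \<ge> 3"
  shows "\<exists>x \<gamma> \<Delta> s y1 y2 d. feasible_Q n cls x \<gamma> \<Delta> s y1 y2 d"
proof -
  define e::real where "e = (1/2)^(2^n)"
  have e: "0 < e" "e \<le> 1" unfolding e_def by (auto simp: power_le_one)
  obtain q where q: "1.2598 \<le> (of_rat q::real)" "(of_rat q::real) \<le> 1.26" "((of_rat q::real)^3 - 2)^2 \<le> e"
    using approx[OF e] by blast
  define x::"nat\<Rightarrow>rat" where "x = (\<lambda>j. if j \<le> n then 1 else -1)"
  define d::"nat\<Rightarrow>rat" where "d = (\<lambda>k. (1/2)^(2^(k-1)))"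
  define Y where "Y = (of_rat q :: real)"
  have hY: "h Y (Y^2) = (Y^3 - 2)^2" unfolding h_def
    by (simp add: algebra_simps power2_eq_square power3_eq_cube)
  have Y2: "1.587 \<le> Y^2" "Y^2 \<le> 1.59"
  proof -
    have Yb: "1.2598 \<le> Y" "Y \<le> 1.26" using q Y_def by simp_all
    have "1.2598^2 \<le> Y^2" using Yb by (intro power_mono) auto
    then show "1.587 \<le> Y^2" by (simp add: power2_eq_square)
    have "Y^2 \<le> 1.26^2" using Yb by (intro power_mono) auto
    then show "Y^2 \<le> 1.59" by (simp add: power2_eq_square)
  qed
  have dd: "(\<lambda>k. of_rat (d k) :: real) = (\<lambda>k. (1/2)^(2^(k-1)))"
    unfolding d_def by (simp add: of_rat_power of_rat_divide)
  have inD: "in_D n e (\<lambda>k. of_rat (d k))"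
    unfolding dd e_def by (rule inD_witness[OF assms])
  have sx: "(\<Sum>j = 1..n. (of_rat (x j)::real)^2) = real n" unfolding x_def by simp
  have "feasible_Q n cls x 0 2 ((1/2)^(2^n)) q (q^2) d"
    unfolding feasible_Q_def feasible_S_def
  proof (intro conjI)
    show "in_D n (of_rat ((1/2)^(2^n))) (\<lambda>k. of_rat (d k))" using inD
      by (simp add: e_def of_rat_power of_rat_divide)
    show "in_R (of_rat 0) (of_rat q) (of_rat (q^2))" using q Y2 unfolding in_R_def Y_def
      by (simp add: of_rat_power)
    have "h (of_rat q) (of_rat (q^2)) \<le> e" using hY q Y_def by (simp add: of_rat_power)
    then show "- ((real n) ^ 5 * (\<Sum>j = 1..n. (of_rat (x j))\<^sup>2)) + h (of_rat q) (of_rat (q^2)) - of_rat ((1/2)^(2^n)) \<le> - ((real n) ^ 6)"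
      unfolding sx by (simp add: e_def of_rat_power of_rat_divide power_Suc2[symmetric] del: power_Suc)
  next
    have xv: "\<And>j. (of_rat (x j)::real) = 1 \<or> (of_rat (x j)::real) = -1" unfolding x_def by simp
    show "\<forall>j\<in>{1..2 * n}. - 1 \<le> (of_rat (x j)::real) \<and> (of_rat (x j)::real) \<le> 1"
    proof
      fix j show "- 1 \<le> (of_rat (x j)::real) \<and> (of_rat (x j)::real) \<le> 1" using xv[of j] by linarith
    qed
    show "\<forall>j\<in>{1..n}. (of_rat (x j)::real) + of_rat (x (n + j)) = 0"
      unfolding x_def by simp
    show "\<forall>(l1, l2, l3)\<in>set cls. - 1 - of_rat 2 \<le> (of_rat (x (lit_var n l1))::real) + of_rat (x (lit_var n l2)) + of_rat (x (lit_var n l3))"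
    proof (intro ballI, clarify)
      fix l1 l2 l3
      have "(of_rat (x (lit_var n l1))::real) \<ge> -1" "(of_rat (x (lit_var n l2))::real) \<ge> -1" "(of_rat (x (lit_var n l3))::real) \<ge> -1"
        using xv[of "lit_var n l1"] xv[of "lit_var n l2"] xv[of "lit_var n l3"] by linarith+
      then show "- 1 - of_rat 2 \<le> (of_rat (x (lit_var n l1))::real) + of_rat (x (lit_var n l2)) + of_rat (x (lit_var n l3))" by simp
    qed
  qed simp_all
  then show ?thesis by blast
qed




lemma litneg:
  assumes "lit_ok n l" "\<not> lit_true (\<lambda>j. x j > (0::real)) l"
    "\<forall>j\<in>{1..n}. \<bar>x j\<bar> \<ge> c" "\<forall>j\<in>{1..n}. x j + x (n + j) = 0"
  shows "x (lit_var n l) \<le> - c"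
proof -
  obtain j b where l: "l = (j, b)" by (cases l)
  have j: "j \<in> {1..n}" using assms(1) l by (simp add: lit_ok_def)
  show ?thesis
  proof (cases b)
    case True
    then have "x j \<le> 0" using assms(2) l by (simp add: lit_true_def)
    moreover have "\<bar>x j\<bar> \<ge> c" using assms(3) j by blast
    ultimately show ?thesis using l True by (simp add: lit_var_def)
  next
    case False
    then have "x j > 0" using assms(2) l by (simp add: lit_true_def)
    moreover have "\<bar>x j\<bar> \<ge> c" using assms(3) j by blast
    ultimately have "x j \<ge> c" by simp
    moreover have "x j + x (n + j) = 0" using assms(4) j by blast
    then have "x (n + j) = - x j" by linarith
    ultimately show ?thesis using l False by (simp add: lit_var_def)
  qed
qed

lemma c_real:
  assumes F: "feasible_S n cls x \<gamma> \<Delta> s y1 y2 d" and n: "n \<ge> 3"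
    and inst: "instance_ok n cls" and uns: "\<not> satisfiable cls" and ncube: "y1^3 \<noteq> 2"
  shows "s > 0"
proof (rule ccontr)
  assume ns: "\<not> s > 0"
  have xb: "\<forall>j\<in>{1..2*n}. -1 \<le> x j \<and> x j \<le> 1"
   and xn: "\<forall>j\<in>{1..n}. x j + x (n + j) = 0"
   and cl: "\<forall>(l1, l2, l3) \<in> set cls. x (lit_var n l1) + x (lit_var n l2) + x (lit_var n l3) \<ge> -1 - \<Delta>"
   and g: "\<gamma> \<ge> 0" "0 \<le> \<Delta>" "\<Delta> \<le> 2" "\<Delta> + \<gamma> / 2 \<le> 2"
   and R: "in_R \<gamma> y1 y2" and D: "in_D n s d"
   and main: "- ((real n) ^ 5 * (\<Sum>j = 1..n. (x j)\<^sup>2)) + h y1 y2 - s \<le> - ((real n) ^ 6)"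
    using F unfolding feasible_S_def by auto
  have s0: "s = 0" using D ns unfolding in_D_def by auto
  define S where "S = (\<Sum>j = 1..n. (x j)\<^sup>2)"
  have sq: "\<And>j. j \<in> {1..n} \<Longrightarrow> (x j)^2 \<le> 1 \<and> \<bar>x j\<bar> \<le> 1"
  proof -
    fix j assume "j \<in> {1..n}"
    then have "j \<in> {1..2*n}" by auto
    then have "-1 \<le> x j \<and> x j \<le> 1" using xb by blast
    then have "\<bar>x j\<bar> \<le> 1" by linarith
    then show "(x j)^2 \<le> 1 \<and> \<bar>x j\<bar> \<le> 1" by (simp add: abs_square_le_1)
  qed
  have nS: "real n - S = (\<Sum>j = 1..n. 1 - (x j)^2)"
    unfolding S_def by (simp add: sum_subtractf)
  have nSnn: "\<And>j. j \<in> {1..n} \<Longrightarrow> 1 - (x j)^2 \<le> real n - S"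
    unfolding nS by (rule member_le_sum) (use sq in auto)
  have nS0: "0 \<le> real n - S" unfolding nS by (rule sum_nonneg) (use sq in auto)
  have n6: "(real n)^6 = (real n)^5 * real n" by (simp add: power_Suc2[symmetric] del: power_Suc)
  have hle: "h y1 y2 \<le> (real n)^5 * (S - real n)" using main s0 n6 unfolding S_def
    by (simp add: algebra_simps)
  have h0: "h y1 y2 \<le> 0"
  proof -
    have "(real n)^5 * (S - real n) \<le> 0" using nS0 by (intro mult_nonneg_nonpos) auto
    then show ?thesis using hle by linarith
  qed
  have y2: "1.587 \<le> y2" "y2 \<le> 1.59" and y1: "1.259 - \<gamma> \<le> y1" using R unfolding in_R_def by auto
  show False
  proof (cases "y1 \<ge> 0")
    case True
    then show False using h_zero[OF True _ h0] y2 ncube by simp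
  next
    case False
    have gam: "\<gamma> > 1.259" using y1 False by simp
    have y1l: "y1 \<ge> -2.741" using y1 g by simp
    have "(-y1)^3 \<le> 2.741^3" using y1l False by (intro power_mono) auto
    then have c1: "y1^3 \<ge> -20.6" by (simp add: power3_eq_cube)
    have c2: "y2^3 \<ge> 0" using y2 by simp
    have c3: "y1 * y2 \<le> 0" using False y2 by (simp add: mult_nonpos_nonneg)
    have "h y1 y2 = 2*y1^3 + y2^3 - 6*(y1*y2) + 4" unfolding h_def by simp
    then have hlb: "h y1 y2 \<ge> -37.2" using c1 c2 c3 by linarith
    have n5: "(real n)^5 \<ge> 243"
    proof -
      have "(3::real)^5 \<le> (real n)^5" using n by (intro power_mono) auto
      then show ?thesis by simp
    qed
    have "(real n)^5 * (real n - S) \<le> 37.2" using hle hlb by (simp add: algebra_simps)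
    moreover have "243 * (real n - S) \<le> (real n)^5 * (real n - S)" using n5 nS0 by (intro mult_right_mono) auto
    ultimately have small: "real n - S \<le> 0.154" by simp
    have ax: "\<forall>j\<in>{1..n}. \<bar>x j\<bar> \<ge> 0.846"
    proof
      fix j assume j: "j \<in> {1..n}"
      have "(x j)^2 \<ge> 0.846" using nSnn[OF j] small by simp
      moreover have "(x j)^2 \<le> \<bar>x j\<bar>"
      proof -
        have "(x j)^2 = \<bar>x j\<bar> * \<bar>x j\<bar>" by (simp add: power2_eq_square abs_mult[symmetric])
        also have "\<dots> \<le> \<bar>x j\<bar> * 1" using sq[OF j] by (intro mult_left_mono) auto
        finally show ?thesis by simp
      qed
      ultimately show "\<bar>x j\<bar> \<ge> 0.846" by simp
    qed
    obtain l1 l2 l3 where c: "(l1, l2, l3) \<in> set cls"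
      "\<not> lit_true (\<lambda>j. x j > 0) l1" "\<not> lit_true (\<lambda>j. x j > 0) l2" "\<not> lit_true (\<lambda>j. x j > 0) l3"
      using uns unfolding satisfiable_def by fastforce
    have ok: "lit_ok n l1" "lit_ok n l2" "lit_ok n l3" using inst c(1) unfolding instance_ok_def by auto
    have "x (lit_var n l1) \<le> -0.846" "x (lit_var n l2) \<le> -0.846" "x (lit_var n l3) \<le> -0.846"
      using litneg[OF ok(1) c(2) ax xn] litneg[OF ok(2) c(3) ax xn] litneg[OF ok(3) c(4) ax xn] by auto
    moreover have "x (lit_var n l1) + x (lit_var n l2) + x (lit_var n l3) \<ge> -1 - \<Delta>" using cl c(1) by auto
    ultimately show False using g gam by (simp; linarith)
  qed
qed




lemma rat_size_small:
  assumes "0 < s" "(of_rat s::real) \<le> (1/2)^(2^n)"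
  shows "rat_size s \<ge> 2^n"
proof -
  obtain p q where pq: "quotient_of s = (p, q)" by (cases "quotient_of s")
  have q0: "q > 0" using quotient_of_denom_pos[OF pq] .
  have sd: "s = of_int p / of_int q" using quotient_of_div[OF pq] .
  have rs: "(of_rat s::real) = of_int p / of_int q" unfolding sd by (simp add: of_rat_divide)
  have "0 < (of_int p / of_int q :: rat)" using assms(1) sd by simp
  then have p0: "p > 0" using q0 by (simp add: zero_less_divide_iff)
  have qr: "(0::real) < of_int q" using q0 by simp
  have "(of_int p / of_int q :: real) \<le> 1 / 2^(2^n)" using assms(2) rs by (simp add: power_divide)
  then have "of_int p \<le> (of_int q :: real) / 2^(2^n)" using qr by (simp add: field_simps)
  then have "2^(2^n) * of_int p \<le> (of_int q :: real)" by (simp add: field_simps)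
  moreover have "(2::real)^(2^n) \<le> 2^(2^n) * of_int p" using p0 by simp
  ultimately have q2: "(2::real)^(2^n) \<le> of_int q" by linarith
  have pw: "2 powr (real (2^n)) = (2::real)^(2^n)" by (rule powr_realpow) simp
  have "real (2^n) \<le> log 2 (of_int q)"
    using q2 qr pw le_log_iff[of 2 "of_int q" "real (2^n)"] by simp
  then have "real (2^n) \<le> real_of_int \<lceil>log 2 (of_int q)\<rceil>" by (meson le_of_int_ceiling order_trans)
  then have A: "2^n \<le> nat \<lceil>log 2 (of_int q)\<rceil>" by linarith
  show ?thesis unfolding rat_size_def pq prod.case using A by linarith
qed




lemma part_c:
  assumes n: "n \<ge> 3" and inst: "instance_ok n cls" and uns: "\<not> satisfiable cls"
    and FQ: "feasible_Q n cls x \<gamma> \<Delta> s y1 y2 d"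
  shows "sol_size n x \<gamma> \<Delta> s y1 y2 d \<ge> 2 ^ n"
proof -
  have FS: "feasible_S n cls (\<lambda>j. of_rat (x j)) (of_rat \<gamma>) (of_rat \<Delta>) (of_rat s)
       (of_rat y1) (of_rat y2) (\<lambda>k. of_rat (d k))" using FQ unfolding feasible_Q_def .
  have nc: "(of_rat y1 :: real)^3 \<noteq> 2"
  proof
    assume "(of_rat y1 :: real)^3 = 2"
    then have "(of_rat (y1^3) :: real) = of_rat 2" by (simp add: of_rat_power)
    then have "y1^3 = 2" by (simp only: of_rat_eq_iff)
    with no_rat_cube show False by blast
  qed
  have "(of_rat s :: real) > 0" using c_real[OF FS n inst uns nc] .
  then have s0: "s > 0" by simp
  have "in_D n (of_rat s) (\<lambda>k. of_rat (d k))" using FS unfolding feasible_S_def by auto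
  then have "(of_rat s :: real) \<le> (1/2)^(2^n)" using s_bound n by simp
  then have "rat_size s \<ge> 2^n" using rat_size_small s0 by blast
  then show ?thesis unfolding sol_size_def by linarith
qed

lemma rs1: "rat_size 1 = 1" "rat_size (-1) = 1" "rat_size 0 = 0"
  by (simp_all add: rat_size_def)

lemma part_b:
  assumes n: "n \<ge> 3" and inst: "instance_ok n cls" and sat: "satisfiable cls"
  shows "\<exists>x \<gamma> \<Delta> s y1 y2 d. feasible_Q n cls x \<gamma> \<Delta> s y1 y2 d \<and>
                 sol_size n x \<gamma> \<Delta> s y1 y2 d \<le> 4 * n +
     (rat_size 4 + rat_size 0 + rat_size 0 + rat_size (-2741/1000) + rat_size (159/100))"
proof -
  obtain a where a: "\<forall>(l1, l2, l3) \<in> set cls. lit_true a l1 \<or> lit_true a l2 \<or> lit_true a l3"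
    using sat unfolding satisfiable_def by blast
  define x :: "nat \<Rightarrow> rat" where
    "x = (\<lambda>j. if j \<le> n then (if a j then 1 else -1) else (if a (j - n) then -1 else 1))"
  have xv: "\<And>j. x j = 1 \<or> x j = -1" unfolding x_def by auto
  have lv: "\<And>l. lit_ok n l \<Longrightarrow> (of_rat (x (lit_var n l)) :: real) = (if lit_true a l then 1 else -1)"
  proof -
    fix l assume "lit_ok n l"
    then have j: "1 \<le> fst l" "fst l \<le> n" unfolding lit_ok_def by auto
    show "(of_rat (x (lit_var n l)) :: real) = (if lit_true a l then 1 else -1)"
    proof (cases "snd l")
      case True then show ?thesis using j by (simp add: lit_var_def lit_true_def x_def)
    next
      case False then show ?thesis using j by (simp add: lit_var_def lit_true_def x_def)
    qed
  qed
  have cl: "\<forall>(l1, l2, l3)\<in>set cls. - 1 - (of_rat 0::real) \<le>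
      of_rat (x (lit_var n l1)) + of_rat (x (lit_var n l2)) + of_rat (x (lit_var n l3))"
  proof (intro ballI, clarify)
    fix l1 l2 l3 assume c: "(l1, l2, l3) \<in> set cls"
    have ok: "lit_ok n l1" "lit_ok n l2" "lit_ok n l3" using inst c unfolding instance_ok_def by auto
    have "lit_true a l1 \<or> lit_true a l2 \<or> lit_true a l3" using a c by auto
    then show "- 1 - (of_rat 0::real) \<le>
      of_rat (x (lit_var n l1)) + of_rat (x (lit_var n l2)) + of_rat (x (lit_var n l3))"
      using lv[OF ok(1)] lv[OF ok(2)] lv[OF ok(3)] by auto
  qed
  have sx: "(\<Sum>j = 1..n. (of_rat (x j)::real)^2) = real n"
  proof -
    have "\<And>j. (of_rat (x j)::real)^2 = 1" using xv by (metis of_rat_1 of_rat_minus one_power2 power2_minus)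
    then show ?thesis by simp
  qed
  have hv: "h (of_rat (-2741/1000)) (of_rat (159/100)) \<le> 0"
    by (simp add: h_def of_rat_divide of_rat_minus power3_eq_cube)
  have n6: "(real n)^6 = (real n)^5 * real n" by (simp add: power_Suc2[symmetric] del: power_Suc)
  have F: "feasible_Q n cls x 4 0 0 (-2741/1000) (159/100) (\<lambda>k. 0)"
    unfolding feasible_Q_def feasible_S_def
  proof (intro conjI)
    show "\<forall>j\<in>{1..2 * n}. - 1 \<le> (of_rat (x j)::real) \<and> (of_rat (x j)::real) \<le> 1"
    proof
      fix j show "- 1 \<le> (of_rat (x j)::real) \<and> (of_rat (x j)::real) \<le> 1" using xv[of j] by auto
    qed
    show "\<forall>j\<in>{1..n}. (of_rat (x j)::real) + of_rat (x (n + j)) = 0"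
      unfolding x_def by simp
    show "- ((real n) ^ 5 * (\<Sum>j = 1..n. (of_rat (x j))\<^sup>2)) + h (of_rat (-2741/1000)) (of_rat (159/100)) - of_rat 0 \<le> - ((real n) ^ 6)"
      unfolding sx n6 using hv by simp
    show "in_R (of_rat 4) (of_rat (-2741/1000)) (of_rat (159/100))"
      unfolding in_R_def by (simp add: of_rat_divide of_rat_minus)
    show "in_D n (of_rat 0) (\<lambda>k. of_rat 0)" unfolding in_D_def by simp
  qed (use cl in simp_all)
  have sz: "(\<Sum>j = 1..2*n. rat_size (x j)) \<le> 4 * n"
  proof -
    have "(\<Sum>j = 1..2*n. rat_size (x j)) \<le> (\<Sum>j = 1..2*n. 2)"
    proof (rule sum_mono)
      fix j show "rat_size (x j) \<le> 2" using xv[of j] rs1 by (cases "x j = 1") auto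
    qed
    then show ?thesis by simp
  qed
  have "sol_size n x 4 0 0 (-2741/1000) (159/100) (\<lambda>k. 0) \<le> 4 * n +
     (rat_size 4 + rat_size 0 + rat_size 0 + rat_size (-2741/1000) + rat_size (159/100))"
    unfolding sol_size_def using sz rs1 by simp
  with F show ?thesis by blast
qed


theorem theorem1:
  shows "(\<forall>n cls. n \<ge> 3 \<longrightarrow> instance_ok n cls \<longrightarrow>
            (\<exists>x \<gamma> \<Delta> s y1 y2 d. feasible_Q n cls x \<gamma> \<Delta> s y1 y2 d))
       \<and> (\<exists>L::nat. \<forall>n cls. n \<ge> 3 \<longrightarrow> instance_ok n cls \<longrightarrow> satisfiable cls \<longrightarrow>
            (\<exists>x \<gamma> \<Delta> s y1 y2 d. feasible_Q n cls x \<gamma> \<Delta> s y1 y2 d \<and>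
                 sol_size n x \<gamma> \<Delta> s y1 y2 d \<le> 4 * n + L))
       \<and> (\<forall>n cls. n \<ge> 3 \<longrightarrow> instance_ok n cls \<longrightarrow> \<not> satisfiable cls \<longrightarrow>
            (\<forall>x \<gamma> \<Delta> s y1 y2 d. feasible_Q n cls x \<gamma> \<Delta> s y1 y2 d \<longrightarrow>
                 sol_size n x \<gamma> \<Delta> s y1 y2 d \<ge> 2 ^ n))"
proof (intro conjI)
  show "\<forall>n cls. n \<ge> 3 \<longrightarrow> instance_ok n cls \<longrightarrow>
            (\<exists>x \<gamma> \<Delta> s y1 y2 d. feasible_Q n cls x \<gamma> \<Delta> s y1 y2 d)"
    using part_a by blast
  show "\<exists>L::nat. \<forall>n cls. n \<ge> 3 \<longrightarrow> instance_ok n cls \<longrightarrow> satisfiable cls \<longrightarrow>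
            (\<exists>x \<gamma> \<Delta> s y1 y2 d. feasible_Q n cls x \<gamma> \<Delta> s y1 y2 d \<and>
                 sol_size n x \<gamma> \<Delta> s y1 y2 d \<le> 4 * n + L)"
    using part_b by blast
  show "\<forall>n cls. n \<ge> 3 \<longrightarrow> instance_ok n cls \<longrightarrow> \<not> satisfiable cls \<longrightarrow>
            (\<forall>x \<gamma> \<Delta> s y1 y2 d. feasible_Q n cls x \<gamma> \<Delta> s y1 y2 d \<longrightarrow>
                 sol_size n x \<gamma> \<Delta> s y1 y2 d \<ge> 2 ^ n)"
    using part_c by blast
qed

end
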